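(* Let $X$ be a non-empty set, let $a\notin X$, and let $G$ be the free group on $X\cup\{a\}$. For each $y\in X$ let $\psi_y$ be the endomorphism of $G$ with $\psi_y(y)=a$, $\psi_y(a)=1$ and $\psi_y(x)=1$ for $x\in X\setminus\{y\}$, and define $g\circ_y h=g\cdot\psi_y(g)\cdot h\cdot\psi_y(g)^{-1}$. Then $(\circ_y:y\in X)$ is a brace block on $G$ and the operations $\circ_y$, $y\in X$, are pairwise distinct: $x\circ_y x=x\cdot x$ for $x\in X\setminus\{y\}$, while $y\circ_y y=y\cdot a\cdot y\cdot a^{-1}\ne y\cdot y$.
   Context: A skew brace is a triple $(G,\cdot,\circ)$ where $(G,\cdot)$ and $(G,\circ)$ are groups and $g\circ(h\cdot k)=(g\circ h)\cdot g^{-1}\cdot(g\circ k)$ for all $g,h,k$. A bi-skew brace is a triple $(G,\cdot,\circ)$ such that both $(G,\cdot,\circ)$ and $(G,\circ,\cdot)$ are skew braces. A brace block on a set $G$ is a family of group operations on $G$ any two of which form a bi-skew brace. *)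

theory Defs
  imports "HOL-Algebra.Group"
begin

text \<open>A letter is a pair (inverted?, generator). A word is a list of letters.\<close>
type_synonym 'x word = "(bool \<times> 'x) list"

definition cancels :: "bool \<times> 'x \<Rightarrow> bool \<times> 'x \<Rightarrow> bool" where
  "cancels p q \<longleftrightarrow> snd p = snd q \<and> fst p \<noteq> fst q"

fun reduced :: "'x word \<Rightarrow> bool" where
  "reduced [] = True"
| "reduced [p] = True"
| "reduced (p # q # ws) = (\<not> cancels p q \<and> reduced (q # ws))"

definition red_cons :: "bool \<times> 'x \<Rightarrow> 'x word \<Rightarrow> 'x word" where
  "red_cons p ws = (case ws of [] \<Rightarrow> [p] | q # qs \<Rightarrow> if cancels p q then qs else p # ws)"

definition reduce :: "'x word \<Rightarrow> 'x word" where
  "reduce ws = foldr red_cons ws []"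

definition free_grp :: "'x set \<Rightarrow> 'x word monoid" where
  "free_grp S = \<lparr> carrier = {ws. reduced ws \<and> snd ` set ws \<subseteq> S},
                  mult = (\<lambda>g h. reduce (g @ h)), one = [] \<rparr>"

definition gen :: "'x \<Rightarrow> 'x word" where
  "gen x = [(False, x)]"

definition psi :: "'x \<Rightarrow> 'x \<Rightarrow> 'x word \<Rightarrow> 'x word" where
  "psi a y w = reduce (concat (map (\<lambda>(b, x). if x = y then [(b, a)] else []) w))"

definition grp_of :: "'g set \<Rightarrow> ('g \<Rightarrow> 'g \<Rightarrow> 'g) \<Rightarrow> 'g monoid" where
  "grp_of S f = \<lparr> carrier = S, mult = f,
      one = (THE e. e \<in> S \<and> (\<forall>x\<in>S. f e x = x \<and> f x e = x)) \<rparr>"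

definition is_group_op :: "'g set \<Rightarrow> ('g \<Rightarrow> 'g \<Rightarrow> 'g) \<Rightarrow> bool" where
  "is_group_op S f \<longleftrightarrow> group (grp_of S f)"

definition skew_brace :: "'g set \<Rightarrow> ('g \<Rightarrow> 'g \<Rightarrow> 'g) \<Rightarrow> ('g \<Rightarrow> 'g \<Rightarrow> 'g) \<Rightarrow> bool" where
  "skew_brace S dot circ \<longleftrightarrow> is_group_op S dot \<and> is_group_op S circ \<and>
     (\<forall>g\<in>S. \<forall>h\<in>S. \<forall>k\<in>S.
        circ g (dot h k) = dot (dot (circ g h) (inv\<^bsub>grp_of S dot\<^esub> g)) (circ g k))"

definition bi_skew_brace :: "'g set \<Rightarrow> ('g \<Rightarrow> 'g \<Rightarrow> 'g) \<Rightarrow> ('g \<Rightarrow> 'g \<Rightarrow> 'g) \<Rightarrow> bool" where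
  "bi_skew_brace S dot circ \<longleftrightarrow> skew_brace S dot circ \<and> skew_brace S circ dot"

definition brace_block :: "'g set \<Rightarrow> 'i set \<Rightarrow> ('i \<Rightarrow> 'g \<Rightarrow> 'g \<Rightarrow> 'g) \<Rightarrow> bool" where
  "brace_block S I ops \<longleftrightarrow> (\<forall>i\<in>I. is_group_op S (ops i)) \<and>
     (\<forall>i\<in>I. \<forall>j\<in>I. bi_skew_brace S (ops i) (ops j))"

end

theory Submission
  imports Defs
begin


lemma reduced_tl: "reduced (p # ws) \<Longrightarrow> reduced ws"
  by (cases ws) auto

lemma red_cons_reduced: "reduced ws \<Longrightarrow> reduced (red_cons p ws)"
  by (cases ws) (auto simp: red_cons_def dest: reduced_tl)

lemma foldr_red_reduced: "reduced zs \<Longrightarrow> reduced (foldr red_cons w zs)"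
  by (induction w) (auto intro: red_cons_reduced)

lemma reduce_reduced: "reduced (reduce ws)"
  unfolding reduce_def by (rule foldr_red_reduced) simp

lemma reduce_Cons: "reduce (p # ws) = red_cons p (reduce ws)"
  by (simp add: reduce_def)

lemma reduce_append: "reduce (xs @ ys) = foldr red_cons xs (reduce ys)"
  by (simp add: reduce_def)

lemma reduced_reduce_id: "reduced ws \<Longrightarrow> reduce ws = ws"
proof (induction ws)
  case Nil then show ?case by (simp add: reduce_def)
next
  case (Cons p ws)
  then have "reduce ws = ws" using reduced_tl by blast
  then show ?case using Cons.prems
    by (cases ws) (auto simp: reduce_Cons red_cons_def)
qed

lemma set_red_cons: "set (red_cons p ws) \<subseteq> insert p (set ws)"
  by (cases ws) (auto simp: red_cons_def)

lemma set_foldr_red: "set (foldr red_cons w zs) \<subseteq> set w \<union> set zs"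
  apply (induction w)
   apply simp
  using set_red_cons by fastforce

lemma set_reduce: "set (reduce ws) \<subseteq> set ws"
  unfolding reduce_def using set_foldr_red[of ws "[]"] by simp

lemma cancel2: "cancels p q \<Longrightarrow> reduced v \<Longrightarrow> red_cons p (red_cons q v) = v"
proof (cases v)
  case Nil
  assume "cancels p q" then show ?thesis using Nil by (simp add: red_cons_def)
next
  case (Cons r v')
  assume c: "cancels p q" and rv: "reduced v"
  show ?thesis
  proof (cases "cancels q r")
    case True
    then have pr: "p = r" using c by (cases p; cases q; cases r) (auto simp: cancels_def)
    have "\<not> (case v' of [] \<Rightarrow> False | s # _ \<Rightarrow> cancels r s)"
      using rv Cons by (cases v') auto
    then show ?thesis using Cons True pr by (cases v') (auto simp: red_cons_def)
  next
    case False
    then show ?thesis using Cons c by (simp add: red_cons_def)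
  qed
qed

lemma red_cons_foldr:
  assumes "reduced u" "reduced zs"
  shows "red_cons p (foldr red_cons u zs) = foldr red_cons (red_cons p u) zs"
proof (cases u)
  case Nil then show ?thesis by (simp add: red_cons_def)
next
  case (Cons q w')
  show ?thesis
  proof (cases "cancels p q")
    case True
    have "reduced (foldr red_cons w' zs)" using assms foldr_red_reduced by blast
    then have "red_cons p (red_cons q (foldr red_cons w' zs)) = foldr red_cons w' zs"
      using True cancel2 by blast
    then show ?thesis using True Cons by (simp add: red_cons_def[of p "q # w'"])
  next
    case False
    then show ?thesis using Cons by (simp add: red_cons_def)
  qed
qed

lemma foldr_reduce: "reduced zs \<Longrightarrow> foldr red_cons (reduce w) zs = foldr red_cons w zs"
proof (induction w)
  case Nil then show ?case by (simp add: reduce_def)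
next
  case (Cons p w)
  have "foldr red_cons (reduce (p # w)) zs = red_cons p (foldr red_cons (reduce w) zs)"
    using red_cons_foldr[OF reduce_reduced Cons.prems] by (simp add: reduce_Cons)
  then show ?case using Cons by simp
qed

definition flip :: "bool \<times> 'x \<Rightarrow> bool \<times> 'x" where "flip p = (\<not> fst p, snd p)"

lemma cancels_flip: "cancels (flip p) p"
  by (simp add: cancels_def flip_def)

lemma inv_foldr: "reduced zs \<Longrightarrow>
  foldr red_cons (rev (map flip w)) (foldr red_cons w zs) = zs"
proof (induction w arbitrary: zs)
  case Nil then show ?case by simp
next
  case (Cons p w)
  have "reduced (foldr red_cons w zs)" using Cons.prems foldr_red_reduced by blast
  then show ?case using Cons by (simp add: cancel2 cancels_flip)
qed

lemma reduce_reduce_append: "reduce (reduce xs @ ys) = reduce (xs @ ys)"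
  by (simp add: reduce_append foldr_reduce reduce_reduced)

lemma reduce_append_reduce: "reduce (xs @ reduce ys) = reduce (xs @ ys)"
  by (simp add: reduce_append reduced_reduce_id reduce_reduced)

lemma free_grp_simps:
  "carrier (free_grp S) = {ws. reduced ws \<and> snd ` set ws \<subseteq> S}"
  "x \<otimes>\<^bsub>free_grp S\<^esub> y = reduce (x @ y)"
  "\<one>\<^bsub>free_grp S\<^esub> = []"
  by (simp_all add: free_grp_def)

lemma free_grp_group: "group (free_grp S)"
proof (rule groupI)
  fix x y assume "x \<in> carrier (free_grp S)" "y \<in> carrier (free_grp S)"
  then show "x \<otimes>\<^bsub>free_grp S\<^esub> y \<in> carrier (free_grp S)"
    using set_reduce[of "x @ y"] by (fastforce simp: free_grp_simps reduce_reduced)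
next
  show "\<one>\<^bsub>free_grp S\<^esub> \<in> carrier (free_grp S)" by (simp add: free_grp_simps)
next
  fix x y z assume "x \<in> carrier (free_grp S)" "y \<in> carrier (free_grp S)" "z \<in> carrier (free_grp S)"
  then show "x \<otimes>\<^bsub>free_grp S\<^esub> y \<otimes>\<^bsub>free_grp S\<^esub> z = x \<otimes>\<^bsub>free_grp S\<^esub> (y \<otimes>\<^bsub>free_grp S\<^esub> z)"
    by (simp add: free_grp_simps reduce_reduce_append reduce_append_reduce)
next
  fix x assume "x \<in> carrier (free_grp S)"
  then show "\<one>\<^bsub>free_grp S\<^esub> \<otimes>\<^bsub>free_grp S\<^esub> x = x"
    by (simp add: free_grp_simps reduced_reduce_id)
next
  fix x assume x: "x \<in> carrier (free_grp S)"
  let ?y = "reduce (rev (map flip x))"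
  have "?y \<in> carrier (free_grp S)"
    using x set_reduce[of "rev (map flip x)"] by (fastforce simp: free_grp_simps reduce_reduced flip_def)
  moreover have "?y \<otimes>\<^bsub>free_grp S\<^esub> x = \<one>\<^bsub>free_grp S\<^esub>"
    using x inv_foldr[of "[]" x]
    by (simp add: free_grp_simps reduce_reduce_append reduce_append reduce_def[symmetric]
        reduced_reduce_id foldr_reduce)
  ultimately show "\<exists>y\<in>carrier (free_grp S). y \<otimes>\<^bsub>free_grp S\<^esub> x = \<one>\<^bsub>free_grp S\<^esub>" by blast
qed




definition cop :: "('g, 'm) monoid_scheme \<Rightarrow> ('g \<Rightarrow> 'g) \<Rightarrow> 'g \<Rightarrow> 'g \<Rightarrow> 'g" where
  "cop G p g h = g \<otimes>\<^bsub>G\<^esub> p g \<otimes>\<^bsub>G\<^esub> h \<otimes>\<^bsub>G\<^esub> inv\<^bsub>G\<^esub> (p g)"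

context group begin

lemma inv_cancel_left2: "x \<in> carrier G \<Longrightarrow> y \<in> carrier G \<Longrightarrow> inv x \<otimes> (x \<otimes> y) = y"
  by (simp add: m_assoc[symmetric])
lemma inv_cancel_left3: "x \<in> carrier G \<Longrightarrow> y \<in> carrier G \<Longrightarrow> x \<otimes> (inv x \<otimes> y) = y"
  by (simp add: m_assoc[symmetric])

lemma hom_props:
  assumes "p \<in> hom G G" "x \<in> carrier G" "y \<in> carrier G"
  shows "p x \<in> carrier G" "p (x \<otimes> y) = p x \<otimes> p y" "p (inv x) = inv (p x)" "p \<one> = \<one>"
proof -
  interpret group_hom G G p using assms(1) by (simp add: group_hom_def group_hom_axioms_def is_group)
  show "p x \<in> carrier G" "p (x \<otimes> y) = p x \<otimes> p y" "p (inv x) = inv (p x)" "p \<one> = \<one>"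
    using assms by auto
qed

lemma cop_closed: "p \<in> hom G G \<Longrightarrow> g \<in> carrier G \<Longrightarrow> h \<in> carrier G \<Longrightarrow> cop G p g h \<in> carrier G"
  by (simp add: cop_def hom_props)

lemma hom_cop:
  assumes p: "p \<in> hom G G" and q: "q \<in> hom G G" and pq: "\<forall>x\<in>carrier G. p (q x) = \<one>"
    and g: "g \<in> carrier G" and h: "h \<in> carrier G"
  shows "p (cop G q g h) = p g \<otimes> p h"
  using g h by (simp add: cop_def hom_props[OF p] hom_props[OF q] pq)

lemma cop_one_left: "p \<in> hom G G \<Longrightarrow> h \<in> carrier G \<Longrightarrow> cop G p \<one> h = h"
  by (simp add: cop_def hom_props)

lemma cop_one_right: "p \<in> hom G G \<Longrightarrow> h \<in> carrier G \<Longrightarrow> cop G p h \<one> = h"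
  by (simp add: cop_def hom_props m_assoc)

lemma cop_assoc:
  assumes p: "p \<in> hom G G" and pp: "\<forall>x\<in>carrier G. p (p x) = \<one>"
    and g: "g \<in> carrier G" and h: "h \<in> carrier G" and k: "k \<in> carrier G"
  shows "cop G p (cop G p g h) k = cop G p g (cop G p h k)"
  using g h k hom_cop[OF p p pp g h]
  by (simp add: cop_def hom_props[OF p] m_assoc inv_mult_group inv_cancel_left2)

definition copinv where "copinv p g = inv (p g) \<otimes> inv g \<otimes> p g"

lemma copinv_closed: "p \<in> hom G G \<Longrightarrow> g \<in> carrier G \<Longrightarrow> copinv p g \<in> carrier G"
  by (simp add: copinv_def hom_props)

lemma cop_linv:
  assumes p: "p \<in> hom G G" and pp: "\<forall>x\<in>carrier G. p (p x) = \<one>" and g: "g \<in> carrier G"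
  shows "cop G p (copinv p g) g = \<one>"
proof -
  have "p (copinv p g) = inv (p g)"
    using g by (simp add: copinv_def hom_props[OF p] pp)
  then show ?thesis using g
    by (simp add: cop_def copinv_def hom_props[OF p] m_assoc inv_cancel_left2)
qed

lemma grp_of_one:
  assumes p: "p \<in> hom G G"
  shows "\<one>\<^bsub>grp_of (carrier G) (cop G p)\<^esub> = \<one>"
proof -
  have "(THE e. e \<in> carrier G \<and> (\<forall>x\<in>carrier G. cop G p e x = x \<and> cop G p x e = x)) = \<one>"
  proof (rule the_equality)
    show "\<one> \<in> carrier G \<and> (\<forall>x\<in>carrier G. cop G p \<one> x = x \<and> cop G p x \<one> = x)"
      using cop_one_left[OF p] cop_one_right[OF p] by simp
  next
    fix e assume "e \<in> carrier G \<and> (\<forall>x\<in>carrier G. cop G p e x = x \<and> cop G p x e = x)"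
    then have "cop G p \<one> e = \<one>" "e \<in> carrier G" by auto
    then show "e = \<one>" using cop_one_left[OF p] by simp
  qed
  then show ?thesis by (simp add: grp_of_def)
qed

lemma cop_group:
  assumes p: "p \<in> hom G G" and pp: "\<forall>x\<in>carrier G. p (p x) = \<one>"
  shows "group (grp_of (carrier G) (cop G p))"
proof (rule groupI)
  note one = grp_of_one[OF p]
  show "\<one>\<^bsub>grp_of (carrier G) (cop G p)\<^esub> \<in> carrier (grp_of (carrier G) (cop G p))"
    using one by (simp add: grp_of_def)
  show "\<And>x y. x \<in> carrier (grp_of (carrier G) (cop G p)) \<Longrightarrow>
           y \<in> carrier (grp_of (carrier G) (cop G p)) \<Longrightarrow>
           x \<otimes>\<^bsub>grp_of (carrier G) (cop G p)\<^esub> y \<in> carrier (grp_of (carrier G) (cop G p))"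
    using cop_closed[OF p] by (simp add: grp_of_def)
  show "\<And>x y z. x \<in> carrier (grp_of (carrier G) (cop G p)) \<Longrightarrow>
           y \<in> carrier (grp_of (carrier G) (cop G p)) \<Longrightarrow>
           z \<in> carrier (grp_of (carrier G) (cop G p)) \<Longrightarrow>
           x \<otimes>\<^bsub>grp_of (carrier G) (cop G p)\<^esub> y \<otimes>\<^bsub>grp_of (carrier G) (cop G p)\<^esub> z =
           x \<otimes>\<^bsub>grp_of (carrier G) (cop G p)\<^esub> (y \<otimes>\<^bsub>grp_of (carrier G) (cop G p)\<^esub> z)"
    using cop_assoc[OF p pp] by (simp add: grp_of_def)
  show "\<And>x. x \<in> carrier (grp_of (carrier G) (cop G p)) \<Longrightarrow>
         \<one>\<^bsub>grp_of (carrier G) (cop G p)\<^esub> \<otimes>\<^bsub>grp_of (carrier G) (cop G p)\<^esub> x = x"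
    using one cop_one_left[OF p] by (simp add: grp_of_def)
  show "\<And>x. x \<in> carrier (grp_of (carrier G) (cop G p)) \<Longrightarrow>
         \<exists>y\<in>carrier (grp_of (carrier G) (cop G p)). y \<otimes>\<^bsub>grp_of (carrier G) (cop G p)\<^esub> x =
            \<one>\<^bsub>grp_of (carrier G) (cop G p)\<^esub>"
    using one cop_linv[OF p pp] copinv_closed[OF p] by (simp add: grp_of_def) blast
qed

lemma cop_inv:
  assumes p: "p \<in> hom G G" and pp: "\<forall>x\<in>carrier G. p (p x) = \<one>" and g: "g \<in> carrier G"
  shows "inv\<^bsub>grp_of (carrier G) (cop G p)\<^esub> g = copinv p g"
proof -
  interpret H: group "grp_of (carrier G) (cop G p)" by (rule cop_group[OF p pp])
  show ?thesis
    apply (rule H.inv_equality)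
    using cop_linv[OF p pp g] grp_of_one[OF p] g copinv_closed[OF p g] by (simp_all add: grp_of_def)
qed


lemma cop_skew_eq:
  assumes p: "p \<in> hom G G" and q: "q \<in> hom G G"
    and pp: "\<forall>x\<in>carrier G. p (p x) = \<one>" and pq: "\<forall>x\<in>carrier G. p (q x) = \<one>"
    and cpp: "\<forall>x\<in>carrier G. \<forall>y\<in>carrier G. p x \<otimes> p y = p y \<otimes> p x"
    and cpq: "\<forall>x\<in>carrier G. \<forall>y\<in>carrier G. p x \<otimes> q y = q y \<otimes> p x"
    and g: "g \<in> carrier G" and h: "h \<in> carrier G" and k: "k \<in> carrier G"
  shows "cop G q g (cop G p h k) = cop G p (cop G p (cop G q g h) (copinv p g)) (cop G q g k)"
proof -
  note P = hom_props[OF p] and Q = hom_props[OF q]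
  define Pg where "Pg = p g"
  define Ph where "Ph = p h"
  define Fg where "Fg = q g"
  have c: "Pg \<in> carrier G" "Ph \<in> carrier G" "Fg \<in> carrier G" using g h by (auto simp: Pg_def Ph_def Fg_def P Q)
  have pu: "p (cop G q g h) = Pg \<otimes> Ph" using hom_cop[OF p q pq g h] Pg_def Ph_def by simp
  have pinv: "p (copinv p g) = inv Pg" using g by (simp add: copinv_def P pp Pg_def)
  have cgh: "Pg \<otimes> Ph = Ph \<otimes> Pg" using cpp g h by (simp add: Pg_def Ph_def)
  have chg: "Ph \<otimes> Fg = Fg \<otimes> Ph" using cpq g h by (simp add: Fg_def Ph_def)
  have e1: "Pg \<otimes> (Ph \<otimes> (inv Pg \<otimes> r)) = Ph \<otimes> r" if "r \<in> carrier G" for r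
  proof -
    have "Pg \<otimes> (Ph \<otimes> (inv Pg \<otimes> r)) = (Pg \<otimes> Ph) \<otimes> (inv Pg \<otimes> r)"
      using that c by (simp add: m_assoc)
    also have "\<dots> = (Ph \<otimes> Pg) \<otimes> (inv Pg \<otimes> r)" by (simp only: cgh)
    also have "\<dots> = Ph \<otimes> r" using that c by (simp add: m_assoc inv_cancel_left3)
    finally show ?thesis .
  qed
  have e2: "inv Fg \<otimes> (Ph \<otimes> (Fg \<otimes> r)) = Ph \<otimes> r" if "r \<in> carrier G" for r
  proof -
    have "inv Fg \<otimes> (Ph \<otimes> (Fg \<otimes> r)) = inv Fg \<otimes> ((Ph \<otimes> Fg) \<otimes> r)"
      using that c by (simp add: m_assoc)
    also have "\<dots> = inv Fg \<otimes> ((Fg \<otimes> Ph) \<otimes> r)" by (simp only: chg)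
    also have "\<dots> = Ph \<otimes> r" using that c by (simp add: m_assoc inv_cancel_left2)
    finally show ?thesis .
  qed
  have e3: "inv Fg \<otimes> (Pg \<otimes> (inv Ph \<otimes> inv Pg)) = inv Ph \<otimes> inv Fg"
  proof -
    have "Pg \<otimes> (inv Ph \<otimes> inv Pg) = inv (Pg \<otimes> (Ph \<otimes> inv Pg))"
      using c by (simp add: inv_mult_group m_assoc)
    also have "Pg \<otimes> (Ph \<otimes> inv Pg) = Ph" using e1[of \<one>] c by simp
    finally have "inv Fg \<otimes> (Pg \<otimes> (inv Ph \<otimes> inv Pg)) = inv Fg \<otimes> inv Ph" by simp
    also have "\<dots> = inv (Ph \<otimes> Fg)" using c by (simp add: inv_mult_group)
    also have "\<dots> = inv (Fg \<otimes> Ph)" by (simp only: chg)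
    also have "\<dots> = inv Ph \<otimes> inv Fg" using c by (simp add: inv_mult_group)
    finally show ?thesis .
  qed
  have pv: "p (cop G p (cop G q g h) (copinv p g)) = Ph"
  proof -
    have "Pg \<otimes> (Ph \<otimes> inv Pg) = Ph" using e1[of \<one>] c by simp
    then show ?thesis
    using hom_cop[OF p p pp cop_closed[OF q g h] copinv_closed[OF p g]] pu pinv c
    by (simp add: m_assoc)
  qed
  have e4: "inv Ph \<otimes> (inv Pg \<otimes> (Ph \<otimes> r)) = inv Pg \<otimes> r" if "r \<in> carrier G" for r
  proof -
    have "inv Ph \<otimes> (inv Pg \<otimes> (Ph \<otimes> r)) = inv (Pg \<otimes> Ph) \<otimes> (Ph \<otimes> r)"
      using that c by (simp add: m_assoc inv_mult_group)
    also have "\<dots> = inv (Ph \<otimes> Pg) \<otimes> (Ph \<otimes> r)" by (simp only: cgh)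
    also have "\<dots> = inv Pg \<otimes> r" using that c by (simp add: m_assoc inv_mult_group inv_cancel_left2)
    finally show ?thesis .
  qed
  have e5: "inv Fg \<otimes> inv Ph = inv Ph \<otimes> inv Fg"
    using c chg by (metis inv_mult_group)
  define u where "u = cop G q g h"
  define v where "v = cop G p u (copinv p g)"
  define w where "w = cop G q g k"
  have pv': "p v = Ph" using pv by (simp add: u_def v_def)
  have pu': "p u = Pg \<otimes> Ph" using pu by (simp add: u_def)
  have r1: "cop G p v w = v \<otimes> Ph \<otimes> w \<otimes> inv Ph" by (simp only: cop_def pv')
  have r2: "v = u \<otimes> (Pg \<otimes> Ph) \<otimes> (inv Pg \<otimes> inv g \<otimes> Pg) \<otimes> inv (Pg \<otimes> Ph)"
    by (simp only: v_def cop_def pu' copinv_def Pg_def)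
  have r3: "u = g \<otimes> Fg \<otimes> h \<otimes> inv Fg" by (simp add: u_def cop_def Fg_def)
  have r4: "w = g \<otimes> Fg \<otimes> k \<otimes> inv Fg" by (simp add: w_def cop_def Fg_def)
  have r5: "cop G q g (cop G p h k) = g \<otimes> Fg \<otimes> (h \<otimes> Ph \<otimes> k \<otimes> inv Ph) \<otimes> inv Fg"
    by (simp add: cop_def Fg_def Ph_def)
  show ?thesis
    unfolding u_def[symmetric] v_def[symmetric] w_def[symmetric] r1 r5
    unfolding r2 r3 r4
    using g h k c
    apply (simp add: m_assoc inv_mult_group inv_cancel_left2 inv_cancel_left3 e1 e2 e4 e5)
    done
qed

lemma cop_skew:
  assumes p: "p \<in> hom G G" and q: "q \<in> hom G G"
    and pp: "\<forall>x\<in>carrier G. p (p x) = \<one>" and pq: "\<forall>x\<in>carrier G. p (q x) = \<one>"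
    and qq: "\<forall>x\<in>carrier G. q (q x) = \<one>"
    and cpp: "\<forall>x\<in>carrier G. \<forall>y\<in>carrier G. p x \<otimes> p y = p y \<otimes> p x"
    and cpq: "\<forall>x\<in>carrier G. \<forall>y\<in>carrier G. p x \<otimes> q y = q y \<otimes> p x"
  shows "skew_brace (carrier G) (cop G p) (cop G q)"
  unfolding skew_brace_def is_group_op_def
  using cop_group[OF p pp] cop_group[OF q qq] cop_skew_eq[OF p q pp pq cpp cpq] cop_inv[OF p pp]
  by (simp add: grp_of_def)

end



definition hw :: "'x \<Rightarrow> 'x \<Rightarrow> 'x word \<Rightarrow> 'x word" where
  "hw a y w = concat (map (\<lambda>(b, x). if x = y then [(b, a)] else []) w)"

lemma psi_hw: "psi a y w = reduce (hw a y w)"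
  by (simp add: psi_def hw_def)

lemma hw_Cons: "hw a y (p # w) = (if snd p = y then [(fst p, a)] else []) @ hw a y w"
  by (cases p) (simp add: hw_def)

lemma hw_append: "hw a y (u @ v) = hw a y u @ hw a y v"
  by (simp add: hw_def)

lemma reduce_hw_red_cons:
  "reduce (hw a y (red_cons p v)) = reduce (hw a y (p # v))"
proof (cases v)
  case Nil then show ?thesis by (simp add: red_cons_def)
next
  case (Cons q v')
  show ?thesis
  proof (cases "cancels p q")
    case False then show ?thesis using Cons by (simp add: red_cons_def)
  next
    case True
    then have q: "q = (\<not> fst p, snd p)" by (cases p; cases q) (auto simp: cancels_def)
    have "reduce (hw a y (p # q # v')) = reduce (hw a y v')"
    proof (cases "snd p = y")
      case True
      have "reduce (hw a y (p # q # v')) = red_cons (fst p, a) (red_cons (\<not> fst p, a) (reduce (hw a y v')))"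
        using True q by (simp add: hw_Cons reduce_Cons)
      also have "\<dots> = reduce (hw a y v')"
        by (rule cancel2) (simp_all add: cancels_def reduce_reduced)
      finally show ?thesis .
    next
      case False then show ?thesis using q by (simp add: hw_Cons)
    qed
    then show ?thesis using Cons True by (simp add: red_cons_def)
  qed
qed

lemma reduce_hw_reduce: "reduce (hw a y (reduce w)) = reduce (hw a y w)"
proof (induction w)
  case Nil then show ?case by (simp add: reduce_def hw_def)
next
  case (Cons p w)
  have "reduce (hw a y (reduce (p # w))) = reduce (hw a y (p # reduce w))"
    by (simp add: reduce_Cons reduce_hw_red_cons)
  also have "\<dots> = reduce ((if snd p = y then [(fst p, a)] else []) @ reduce (hw a y (reduce w)))"
    by (simp only: hw_Cons reduce_append_reduce)
  also have "\<dots> = reduce (hw a y (p # w))"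
    by (simp only: Cons hw_Cons reduce_append_reduce)
  finally show ?case .
qed

lemma set_hw: "set (hw a y w) \<subseteq> {(b, a) | b. True}"
  by (auto simp: hw_def split: if_splits)

lemma set_psi: "set (psi a y w) \<subseteq> {(b, a) | b. True}"
  using set_reduce[of "hw a y w"] set_hw[of a y w] by (simp add: psi_hw)

lemma psi_onlya: "a \<noteq> y \<Longrightarrow> set w \<subseteq> {(b, a) | b. True} \<Longrightarrow> psi a y w = []"
proof -
  assume "a \<noteq> y" "set w \<subseteq> {(b, a) | b. True}"
  then have "hw a y w = []" by (induction w) (auto simp: hw_Cons hw_def)
  then show ?thesis by (simp add: psi_hw reduce_def)
qed

lemma psi_hom: "a \<in> S \<Longrightarrow> psi a y \<in> hom (free_grp S) (free_grp S)"
  unfolding hom_def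
proof (intro CollectI conjI ballI)
  assume a: "a \<in> S"
  show "psi a y \<in> carrier (free_grp S) \<rightarrow> carrier (free_grp S)"
    using set_psi a by (fastforce simp: free_grp_simps psi_hw reduce_reduced)
  fix x z assume "x \<in> carrier (free_grp S)" "z \<in> carrier (free_grp S)"
  show "psi a y (x \<otimes>\<^bsub>free_grp S\<^esub> z) = psi a y x \<otimes>\<^bsub>free_grp S\<^esub> psi a y z"
    by (simp add: free_grp_simps psi_hw reduce_hw_reduce hw_append reduce_reduce_append
        reduce_append_reduce)
qed

lemma gen_inv: "a \<in> S \<Longrightarrow> inv\<^bsub>free_grp S\<^esub> (gen a) = [(True, a)]"
proof -
  assume a: "a \<in> S"
  interpret group "free_grp S" by (rule free_grp_group)
  show ?thesis
    by (rule inv_equality) (use a in \<open>simp_all add: free_grp_simps gen_def reduce_def red_cons_def cancels_def\<close>)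
qed

lemma onlya_pow:
  assumes a: "a \<in> S"
  shows "reduced w \<Longrightarrow> set w \<subseteq> {(b, a) | b. True} \<Longrightarrow> \<exists>n::int. w = gen a [^]\<^bsub>free_grp S\<^esub> n"
proof (induction w)
  case Nil
  interpret group "free_grp S" by (rule free_grp_group)
  have "[] = gen a [^]\<^bsub>free_grp S\<^esub> (0::int)" by (simp add: free_grp_simps)
  then show ?case by blast
next
  case (Cons p w)
  interpret group "free_grp S" by (rule free_grp_group)
  have "reduced w" using Cons.prems(1) by (rule reduced_tl)
  moreover have "set w \<subseteq> {(b, a) | b. True}" using Cons.prems(2) by simp
  ultimately obtain n :: int where n: "w = gen a [^]\<^bsub>free_grp S\<^esub> n" using Cons.IH by blast
  obtain b where p: "p = (b, a)" using Cons.prems(2) by auto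
  have ga: "gen a \<in> carrier (free_grp S)" using a by (simp add: free_grp_simps gen_def)
  have ex: "\<exists>s::int. [p] = gen a [^]\<^bsub>free_grp S\<^esub> s"
  proof (cases b)
    case True
    have "gen a [^]\<^bsub>free_grp S\<^esub> (-1::int) = [p]"
      using ga gen_inv[OF a] p True by (simp only: int_pow_neg int_pow_1)
    then show ?thesis by metis
  next
    case False
    have "gen a [^]\<^bsub>free_grp S\<^esub> (1::int) = [p]"
      using ga p False by (simp only: int_pow_1 gen_def)
    then show ?thesis by metis
  qed
  then obtain s where s: "[p] = gen a [^]\<^bsub>free_grp S\<^esub> (s::int)" by blast
  have "p # w = reduce ([p] @ w)"
    using Cons.prems(1) reduced_reduce_id[of "p # w"] by simp
  then have "p # w = [p] \<otimes>\<^bsub>free_grp S\<^esub> w" by (simp only: free_grp_simps)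
  also have "\<dots> = gen a [^]\<^bsub>free_grp S\<^esub> (s + n)"
    using n s ga by (simp only: int_pow_mult)
  finally show ?case by blast
qed

lemma onlya_comm:
  assumes a: "a \<in> S" and u: "reduced u" "set u \<subseteq> {(b, a) | b. True}"
    and v: "reduced v" "set v \<subseteq> {(b, a) | b. True}"
  shows "u \<otimes>\<^bsub>free_grp S\<^esub> v = v \<otimes>\<^bsub>free_grp S\<^esub> u"
proof -
  interpret group "free_grp S" by (rule free_grp_group)
  have ga: "gen a \<in> carrier (free_grp S)" using a by (simp add: free_grp_simps gen_def)
  obtain m n where "u = gen a [^]\<^bsub>free_grp S\<^esub> (m::int)" "v = gen a [^]\<^bsub>free_grp S\<^esub> (n::int)"
    using onlya_pow[OF a] u v by metis
  then show ?thesis using ga by (simp add: int_pow_mult[symmetric] add.commute)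
qed




theorem mainTheorem13:
  fixes X :: "'x set" and a :: 'x
  assumes "X \<noteq> {}" and "a \<notin> X"
  defines "G \<equiv> free_grp (insert a X)"
  defines "circ \<equiv> (\<lambda>y g h. g \<otimes>\<^bsub>G\<^esub> psi a y g \<otimes>\<^bsub>G\<^esub> h \<otimes>\<^bsub>G\<^esub> inv\<^bsub>G\<^esub> (psi a y g))"
  shows "group G
    \<and> (\<forall>y\<in>X. psi a y \<in> hom G G \<and> psi a y (gen y) = gen a \<and> psi a y (gen a) = \<one>\<^bsub>G\<^esub>
            \<and> (\<forall>x\<in>X - {y}. psi a y (gen x) = \<one>\<^bsub>G\<^esub>))
    \<and> (brace_block (carrier G) X circ)
    \<and> (\<forall>y\<in>X. \<forall>x\<in>X - {y}. circ y (gen x) (gen x) = gen x \<otimes>\<^bsub>G\<^esub> gen x)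
    \<and> (\<forall>y\<in>X. circ y (gen y) (gen y) = gen y \<otimes>\<^bsub>G\<^esub> gen a \<otimes>\<^bsub>G\<^esub> gen y \<otimes>\<^bsub>G\<^esub> inv\<^bsub>G\<^esub> (gen a)
              \<and> circ y (gen y) (gen y) \<noteq> gen y \<otimes>\<^bsub>G\<^esub> gen y)
    \<and> (\<forall>y\<in>X. \<forall>z\<in>X. y \<noteq> z \<longrightarrow> (\<exists>g\<in>carrier G. \<exists>h\<in>carrier G. circ y g h \<noteq> circ z g h))"
proof -
  have aS: "a \<in> insert a X" by simp
  have grp: "group G" unfolding G_def by (rule free_grp_group)
  interpret group G by (rule grp)
  have hom: "psi a y \<in> hom G G" for y unfolding G_def by (rule psi_hom[OF aS])
  have genc: "gen x \<in> carrier G" if "x \<in> insert a X" for x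
    using that by (simp add: G_def free_grp_simps gen_def)
  have one: "\<one>\<^bsub>G\<^esub> = []" by (simp add: G_def free_grp_simps)
  have psi_gen: "psi a y (gen x) = (if x = y then gen a else [])" for y x
    by (simp add: psi_def gen_def reduce_def red_cons_def)
  have ya: "y \<noteq> a" if "y \<in> X" for y using that assms(2) by blast
  have pp: "\<forall>x\<in>carrier G. psi a i (psi a j x) = \<one>\<^bsub>G\<^esub>" if "i \<in> X" for i j
    using psi_onlya[OF _ set_psi] ya[OF that] one by metis
  have redpsi: "reduced (psi a j x)" for j x by (simp add: psi_hw reduce_reduced)
  have comm: "\<forall>x\<in>carrier G. \<forall>z\<in>carrier G. psi a i x \<otimes>\<^bsub>G\<^esub> psi a j z = psi a j z \<otimes>\<^bsub>G\<^esub> psi a i x"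
    for i j unfolding G_def using onlya_comm[OF aS redpsi set_psi redpsi set_psi] by blast
  have circ_eq: "circ = (\<lambda>y. cop G (psi a y))"
    by (simp add: circ_def cop_def fun_eq_iff)
  have bb: "brace_block (carrier G) X circ"
    unfolding brace_block_def bi_skew_brace_def circ_eq
  proof (intro conjI ballI)
    fix i assume i: "i \<in> X"
    show "is_group_op (carrier G) (cop G (psi a i))"
      unfolding is_group_op_def by (rule cop_group[OF hom pp[OF i]])
  next
    fix i j assume i: "i \<in> X" and j: "j \<in> X"
    show "skew_brace (carrier G) (cop G (psi a i)) (cop G (psi a j))"
      by (rule cop_skew[OF hom hom pp[OF i] pp[OF i] pp[OF j] comm comm])
    show "skew_brace (carrier G) (cop G (psi a j)) (cop G (psi a i))"
      by (rule cop_skew[OF hom hom pp[OF j] pp[OF j] pp[OF i] comm comm])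
  qed
  have c1: "circ y (gen x) (gen x) = gen x \<otimes>\<^bsub>G\<^esub> gen x" if "y \<in> X" "x \<in> X - {y}" for x y
  proof -
    have "psi a y (gen x) = \<one>\<^bsub>G\<^esub>" using that psi_gen one by simp
    then show ?thesis using genc[of x] that by (simp add: circ_def)
  qed
  have c2: "circ y (gen y) (gen y) = gen y \<otimes>\<^bsub>G\<^esub> gen a \<otimes>\<^bsub>G\<^esub> gen y \<otimes>\<^bsub>G\<^esub> inv\<^bsub>G\<^esub> (gen a)" for y
    by (simp add: circ_def psi_gen)
  have c3: "circ y (gen y) (gen y) \<noteq> gen y \<otimes>\<^bsub>G\<^esub> gen y" if "y \<in> X" for y
  proof -
    have "inv\<^bsub>G\<^esub> (gen a) = [(True, a)]" unfolding G_def by (rule gen_inv[OF aS])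
    then show ?thesis using ya[OF that] c2[of y]
      by (simp add: G_def free_grp_simps gen_def reduce_def red_cons_def cancels_def)
  qed
  show ?thesis
  proof (intro conjI ballI impI)
    show "group G" by (rule grp)
  next
    fix y assume y: "y \<in> X"
    show "psi a y \<in> hom G G" by (rule hom)
    show "psi a y (gen y) = gen a" by (simp add: psi_gen)
    show "psi a y (gen a) = \<one>\<^bsub>G\<^esub>" using ya[OF y] psi_gen one by simp
    fix x assume "x \<in> X - {y}"
    then show "psi a y (gen x) = \<one>\<^bsub>G\<^esub>" using psi_gen one by simp
  next
    show "brace_block (carrier G) X circ" by (rule bb)
  next
    fix y x assume "y \<in> X" "x \<in> X - {y}"
    then show "circ y (gen x) (gen x) = gen x \<otimes>\<^bsub>G\<^esub> gen x" by (rule c1)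
  next
    fix y assume "y \<in> X"
    show "circ y (gen y) (gen y) = gen y \<otimes>\<^bsub>G\<^esub> gen a \<otimes>\<^bsub>G\<^esub> gen y \<otimes>\<^bsub>G\<^esub> inv\<^bsub>G\<^esub> (gen a)" by (rule c2)
    show "circ y (gen y) (gen y) \<noteq> gen y \<otimes>\<^bsub>G\<^esub> gen y" using \<open>y \<in> X\<close> by (rule c3)
  next
    fix y z assume y: "y \<in> X" and z: "z \<in> X" and yz: "y \<noteq> z"
    have "circ y (gen y) (gen y) \<noteq> circ z (gen y) (gen y)"
      using c3[OF y] c1[OF z, of y] y yz by simp
    then show "\<exists>g\<in>carrier G. \<exists>h\<in>carrier G. circ y g h \<noteq> circ z g h"
      using genc[of y] y by blast
  qed
qed


end
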